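(* Let $\star$ be a Weyl star product on $C^\infty(\mathbb R^N)[[\alpha]]$ that is weakly Hermitian and satisfies the stability of unity. Then $\star$ is weakly alternative: for all coordinate indices $i,j,k$, $$x^i\star(x^j\star x^k)-(x^i\star x^j)\star x^k=\tfrac16[x^i,x^j,x^k].$$ More precisely, the associator $A(x^i,x^j,x^k)$ is antisymmetric under exchange of any two of its arguments.
   Context: Work on $\mathbb R^N$ with real coordinates $x^1,\dots,x^N$. Functions are complex-valued smooth functions on $\mathbb R^N$. A star product is a $\mathbb C[[\alpha]]$-bilinear map on $C^\infty(\mathbb R^N)[[\alpha]]$ (formal power series in the real formal parameter $\alpha$). On functions it is given by $f\star g=fg+\sum_{r\ge1}(i\alpha)^rC_r(f,g)$, where the $C_r$ are bilinear bidifferential operators. Complex conjugation ${}^*$ acts coefficientwise on formal series in $\alpha$. Notation: - The associator is $A(f,g,h)=f\star(g\star h)-(f\star g)\star h$. - The star commutator is $[f,g]=f\star g-g\star f$. - The star Jacobiator is $[f,g,h]=[f,[g,h]]+[h,[f,g]]+[g,[h,f]]$. Definitions: - Weyl star product: for every $n\ge1$, all indices $i_1,\dots,i_n$ and all $f$, $$(x^{i_1}\cdots x^{i_n})\star f=\frac1{n!}\sum_{\sigma\in S_n}x^{i_{\sigma(1)}}\star\big(x^{i_{\sigma(2)}}\star(\cdots\star(x^{i_{\sigma(n)}}\star f)\cdots)\big),$$ where $x^{i_1}\cdots x^{i_n}$ denotes the ordinary product. - Weakly Hermitian: $(x^j\star f)^*=f^*\star x^j$ for all $j$ and all $f$. -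 Stability of unity: $f\star1=1\star f=f$ for all $f$. *)

theory Defs
  imports "HOL-Analysis.Analysis" "HOL-Combinatorics.Permutations"
begin

text \<open>Functions on R^N (N = CARD('n)) with complex values, and formal power series
  in the real formal parameter alpha with such coefficients (coefficient n = coefficient of alpha^n).\<close>

type_synonym 'n fn = "real^'n \<Rightarrow> complex"
type_synonym 'n ser = "nat \<Rightarrow> 'n fn"

definition pdiff :: "'n::finite \<Rightarrow> 'n fn \<Rightarrow> 'n fn" where
  "pdiff j f x = vector_derivative (\<lambda>t. f (x + t *\<^sub>R axis j 1)) (at 0)"

fun Dpar :: "'n::finite list \<Rightarrow> 'n fn \<Rightarrow> 'n fn" where
  "Dpar [] f = f"
| "Dpar (j # js) f = pdiff j (Dpar js f)"

definition smooth :: "'n::finite fn \<Rightarrow> bool" where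
  "smooth f \<longleftrightarrow> (\<forall>js. continuous_on UNIV (Dpar js f) \<and>
     (\<forall>j x. ((\<lambda>t. Dpar js f (x + t *\<^sub>R axis j 1)) has_vector_derivative Dpar (j # js) f x) (at 0)))"

definition smooth_ser :: "'n::finite ser \<Rightarrow> bool" where
  "smooth_ser F \<longleftrightarrow> (\<forall>n. smooth (F n))"

definition bidiff :: "('n::finite fn \<Rightarrow> 'n fn \<Rightarrow> 'n fn) \<Rightarrow> bool" where
  "bidiff B \<longleftrightarrow> (\<exists>S c. finite S \<and> (\<forall>p\<in>S. smooth (c p)) \<and>
     (\<forall>f g. smooth f \<longrightarrow> smooth g \<longrightarrow>
        B f g = (\<lambda>x. \<Sum>p\<in>S. c p x * Dpar (fst p) f x * Dpar (snd p) g x)))"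

text \<open>The star product determined by the cochains C r (r >= 1):
  f * g = fg + sum_{r>=1} (i alpha)^r C_r(f,g), extended C[[alpha]]-bilinearly to series.\<close>
definition star :: "(nat \<Rightarrow> 'n fn \<Rightarrow> 'n fn \<Rightarrow> 'n fn) \<Rightarrow> 'n ser \<Rightarrow> 'n ser \<Rightarrow> 'n ser" where
  "star C F G n = (\<lambda>x. (\<Sum>a\<le>n. F a x * G (n - a) x)
      + (\<Sum>r\<in>{1..n}. \<Sum>a\<le>n - r. \<i> ^ r * C r (F a) (G (n - r - a)) x))"

definition fser :: "'n fn \<Rightarrow> 'n ser" where
  "fser f n = (if n = 0 then f else (\<lambda>_. 0))"

definition coord :: "'n::finite \<Rightarrow> 'n ser" where
  "coord j = fser (\<lambda>x. complex_of_real (x $ j))"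

definition one_ser :: "'n ser" where
  "one_ser = fser (\<lambda>_. 1)"

definition conj_ser :: "'n ser \<Rightarrow> 'n ser" where
  "conj_ser F n x = cnj (F n x)"

definition add_ser :: "'n ser \<Rightarrow> 'n ser \<Rightarrow> 'n ser" where
  "add_ser F G n x = F n x + G n x"

definition sub_ser :: "'n ser \<Rightarrow> 'n ser \<Rightarrow> 'n ser" where
  "sub_ser F G n x = F n x - G n x"

definition scale_ser :: "complex \<Rightarrow> 'n ser \<Rightarrow> 'n ser" where
  "scale_ser c F n x = c * F n x"

definition sum_ser :: "('a \<Rightarrow> 'n ser) \<Rightarrow> 'a set \<Rightarrow> 'n ser" where
  "sum_ser H A n x = (\<Sum>a\<in>A. H a n x)"

fun nest :: "(nat \<Rightarrow> 'n fn \<Rightarrow> 'n fn \<Rightarrow> 'n fn) \<Rightarrow> 'n::finite list \<Rightarrow> 'n ser \<Rightarrow> 'n ser" where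
  "nest C [] F = F"
| "nest C (i # is) F = star C (coord i) (nest C is F)"

definition monom :: "'n::finite list \<Rightarrow> 'n ser" where
  "monom is = fser (\<lambda>x. \<Prod>k<length is. complex_of_real (x $ (is ! k)))"

definition weyl :: "(nat \<Rightarrow> 'n::finite fn \<Rightarrow> 'n fn \<Rightarrow> 'n fn) \<Rightarrow> bool" where
  "weyl C \<longleftrightarrow> (\<forall>is F. length is \<ge> 1 \<longrightarrow> smooth_ser F \<longrightarrow>
     star C (monom is) F =
       scale_ser (1 / of_nat (fact (length is)))
         (sum_ser (\<lambda>\<sigma>. nest C (map (\<lambda>k. is ! \<sigma> k) [0..<length is]) F)
                  {\<sigma>. \<sigma> permutes {..<length is}}))"

definition weakly_hermitian :: "(nat \<Rightarrow> 'n::finite fn \<Rightarrow> 'n fn \<Rightarrow> 'n fn) \<Rightarrow> bool" where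
  "weakly_hermitian C \<longleftrightarrow> (\<forall>j F. smooth_ser F \<longrightarrow>
     conj_ser (star C (coord j) F) = star C (conj_ser F) (coord j))"

definition stable_unity :: "(nat \<Rightarrow> 'n::finite fn \<Rightarrow> 'n fn \<Rightarrow> 'n fn) \<Rightarrow> bool" where
  "stable_unity C \<longleftrightarrow> (\<forall>F. smooth_ser F \<longrightarrow> star C F one_ser = F \<and> star C one_ser F = F)"

definition assoc :: "(nat \<Rightarrow> 'n fn \<Rightarrow> 'n fn \<Rightarrow> 'n fn) \<Rightarrow> 'n ser \<Rightarrow> 'n ser \<Rightarrow> 'n ser \<Rightarrow> 'n ser" where
  "assoc C F G H = sub_ser (star C F (star C G H)) (star C (star C F G) H)"

definition comm :: "(nat \<Rightarrow> 'n fn \<Rightarrow> 'n fn \<Rightarrow> 'n fn) \<Rightarrow> 'n ser \<Rightarrow> 'n ser \<Rightarrow> 'n ser" where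
  "comm C F G = sub_ser (star C F G) (star C G F)"

definition jacobiator :: "(nat \<Rightarrow> 'n fn \<Rightarrow> 'n fn \<Rightarrow> 'n fn) \<Rightarrow> 'n ser \<Rightarrow> 'n ser \<Rightarrow> 'n ser \<Rightarrow> 'n ser" where
  "jacobiator C F G H = add_ser (add_ser (comm C F (comm C G H)) (comm C H (comm C F G)))
                                (comm C G (comm C H F))"

end

theory Submission imports Defs begin

lemma Dpar_snoc: "Dpar (js @ [j]) f = Dpar js (pdiff j f)"
  by (induction js) auto

lemma smooth_cont: "smooth f \<Longrightarrow> continuous_on UNIV f"
  unfolding smooth_def by (metis Dpar.simps(1))

lemma smooth_dd: "smooth f \<Longrightarrow> ((\<lambda>t. f (x + t *\<^sub>R axis j 1)) has_vector_derivative pdiff j f x) (at 0)"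
  unfolding smooth_def by (metis Dpar.simps)

lemma smooth_pdiff: "smooth f \<Longrightarrow> smooth (pdiff j f)"
  unfolding smooth_def by (metis Dpar_snoc append_Cons)

lemma smooth_Dpar: "smooth f \<Longrightarrow> smooth (Dpar js f)"
  by (induction js) (auto intro: smooth_pdiff)

lemma pdiff_eq: "(\<And>x. ((\<lambda>t. f (x + t *\<^sub>R axis j 1)) has_vector_derivative g x) (at 0)) \<Longrightarrow> pdiff j f = g"
  unfolding pdiff_def by (auto intro!: ext vector_derivative_at)

lemma smooth_intro:
  assumes c: "continuous_on UNIV f"
    and d: "\<And>j x. ((\<lambda>t. f (x + t *\<^sub>R axis j 1)) has_vector_derivative g j x) (at 0)"
    and s: "\<And>j. smooth (g j)"
  shows "smooth f"
proof -
  have pd: "pdiff j f = g j" for j by (rule pdiff_eq[OF d])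
  show ?thesis unfolding smooth_def
  proof
    fix js :: "'a list"
    show "continuous_on UNIV (Dpar js f) \<and>
         (\<forall>j x. ((\<lambda>t. Dpar js f (x + t *\<^sub>R axis j 1)) has_vector_derivative Dpar (j # js) f x) (at 0))"
    proof (cases js rule: rev_exhaust)
      case Nil
      then show ?thesis using c d pd by simp
    next
      case (snoc ys i)
      have "Dpar js f = Dpar ys (g i)" using snoc pd by (simp add: Dpar_snoc)
      moreover have "Dpar (j # js) f = Dpar (j # ys) (g i)" for j using snoc pd by (simp add: Dpar_snoc)
      ultimately show ?thesis using s[of i] unfolding smooth_def by simp
    qed
  qed
qed

definition SP :: "'n::finite fn \<Rightarrow> bool" where
  "SP h \<longleftrightarrow> (\<exists>L. (\<forall>p\<in>set L. smooth (fst p) \<and> smooth (snd p)) \<and> h = (\<lambda>x. \<Sum>p\<leftarrow>L. fst p x * snd p x))"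

lemma SP_cont_list: "(\<forall>p\<in>set L. smooth (fst p) \<and> smooth (snd p)) \<Longrightarrow> continuous_on UNIV (\<lambda>x. \<Sum>p\<leftarrow>L. fst p x * snd p x)"
proof (induction L)
  case Nil then show ?case by simp
next
  case (Cons p L)
  then have a: "smooth (fst p)" "smooth (snd p)" and b: "continuous_on UNIV (\<lambda>x. \<Sum>p\<leftarrow>L. fst p x * snd p x)"
    by auto
  have "continuous_on UNIV (\<lambda>x. fst p x * snd p x + (\<Sum>p\<leftarrow>L. fst p x * snd p x))"
    by (rule continuous_on_add[OF continuous_on_mult[OF smooth_cont[OF a(1)] smooth_cont[OF a(2)]] b])
  then show ?case by simp
qed

lemma SP_deriv_list:
  "(\<forall>p\<in>set L. smooth (fst p) \<and> smooth (snd p)) \<Longrightarrow>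
   ((\<lambda>t. \<Sum>p\<leftarrow>L. fst p (x + t *\<^sub>R axis j 1) * snd p (x + t *\<^sub>R axis j 1)) has_vector_derivative
     (\<Sum>p\<leftarrow>L. fst p x * pdiff j (snd p) x + pdiff j (fst p) x * snd p x)) (at 0)"
proof (induction L)
  case Nil then show ?case by simp
next
  case (Cons p L)
  have "((\<lambda>t. fst p (x + t *\<^sub>R axis j 1) * snd p (x + t *\<^sub>R axis j 1)) has_vector_derivative
     (fst p (x + 0 *\<^sub>R axis j 1) * pdiff j (snd p) x + pdiff j (fst p) x * snd p (x + 0 *\<^sub>R axis j 1))) (at 0)"
    using Cons.prems by (intro has_vector_derivative_mult smooth_dd) auto
  then have "((\<lambda>t. fst p (x + t *\<^sub>R axis j 1) * snd p (x + t *\<^sub>R axis j 1)) has_vector_derivative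
     (fst p x * pdiff j (snd p) x + pdiff j (fst p) x * snd p x)) (at 0)" by simp
  from has_vector_derivative_add[OF this Cons.IH] Cons.prems show ?case by simp
qed

lemma SP_step:
  assumes "SP h" shows "\<exists>h'. SP h' \<and> (\<forall>x. ((\<lambda>t. h (x + t *\<^sub>R axis j 1)) has_vector_derivative h' x) (at 0))"
proof -
  obtain L where L: "\<forall>p\<in>set L. smooth (fst p) \<and> smooth (snd p)" and h: "h = (\<lambda>x. \<Sum>p\<leftarrow>L. fst p x * snd p x)"
    using assms unfolding SP_def by blast
  define L' where "L' = map (\<lambda>p. (fst p, pdiff j (snd p))) L @ map (\<lambda>p. (pdiff j (fst p), snd p)) L"
  define h' where "h' = (\<lambda>x. \<Sum>p\<leftarrow>L'. fst p x * snd p x)"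
  have L'sm: "\<forall>p\<in>set L'. smooth (fst p) \<and> smooth (snd p)"
  proof -
    have "\<forall>p\<in>set L. smooth (pdiff j (fst p)) \<and> smooth (pdiff j (snd p))" using L smooth_pdiff by blast
    then show ?thesis using L unfolding L'_def by auto
  qed
  have sp: "SP h'" unfolding SP_def h'_def using L'sm by blast
  have eq: "h' x = (\<Sum>p\<leftarrow>L. fst p x * pdiff j (snd p) x + pdiff j (fst p) x * snd p x)" for x
    by (simp add: h'_def L'_def sum_list_addf o_def)
  have d: "((\<lambda>t. h (x + t *\<^sub>R axis j 1)) has_vector_derivative h' x) (at 0)" for x
    unfolding eq h by (rule SP_deriv_list[OF L])
  show ?thesis using sp d by blast
qed

lemma SP_smooth: assumes "SP h" shows "smooth h"
proof -
  have sp: "SP (Dpar js h)" for js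
  proof (induction js)
    case Nil then show ?case using assms by simp
  next
    case (Cons j js)
    obtain h' where h': "SP h'" "\<forall>x. ((\<lambda>t. Dpar js h (x + t *\<^sub>R axis j 1)) has_vector_derivative h' x) (at 0)"
      using SP_step[OF Cons] by blast
    have "pdiff j (Dpar js h) = h'" by (rule pdiff_eq) (use h'(2) in blast)
    then show ?case using h'(1) by simp
  qed
  have cont: "continuous_on UNIV g" if "SP g" for g using that SP_cont_list unfolding SP_def by blast
  show ?thesis unfolding smooth_def
  proof (intro allI conjI)
    fix js j x
    show "continuous_on UNIV (Dpar js h)" using cont sp by blast
    obtain h' where h': "SP h'" "\<forall>x. ((\<lambda>t. Dpar js h (x + t *\<^sub>R axis j 1)) has_vector_derivative h' x) (at 0)"
      using SP_step[OF sp] by blast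
    have "pdiff j (Dpar js h) = h'" by (rule pdiff_eq) (use h'(2) in blast)
    then show "((\<lambda>t. Dpar js h (x + t *\<^sub>R axis j 1)) has_vector_derivative Dpar (j # js) h x) (at 0)"
      using h'(2) by simp
  qed
qed

lemma smooth_zero: "smooth (\<lambda>_. 0)"
proof -
  have "SP (\<lambda>_::real^'n. 0::complex)" unfolding SP_def by (intro exI[of _ "[]"]) simp
  then show ?thesis by (rule SP_smooth)
qed

lemma smooth_const: "smooth (\<lambda>_. c)"
  by (rule smooth_intro[where g="\<lambda>_ _. 0"]) (auto intro: smooth_zero)

lemma smooth_coord: "smooth (\<lambda>x. complex_of_real (x $ i))"
proof (rule smooth_intro[where g="\<lambda>j _. complex_of_real (axis j 1 $ i)"])
  show "continuous_on UNIV (\<lambda>x. complex_of_real (x $ i))" by (intro continuous_intros)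
  fix j x
  have "((\<lambda>t. complex_of_real (x $ i + t * (axis j 1 $ i))) has_vector_derivative complex_of_real (axis j 1 $ i)) (at 0)"
    by (rule has_vector_derivative_of_real) (auto intro!: derivative_eq_intros)
  then show "((\<lambda>t. complex_of_real ((x + t *\<^sub>R axis j 1) $ i)) has_vector_derivative complex_of_real (axis j 1 $ i)) (at 0)"
    by simp
qed (rule smooth_const)

lemma smooth_mult: "smooth f \<Longrightarrow> smooth g \<Longrightarrow> smooth (\<lambda>x. f x * g x)"
proof -
  assume a: "smooth f" "smooth g"
  have "SP (\<lambda>x. f x * g x)"
    unfolding SP_def using a
    by (intro exI[of _ "[(f,g)]"]) simp
  then show ?thesis by (rule SP_smooth)
qed

lemma smooth_add: "smooth f \<Longrightarrow> smooth g \<Longrightarrow> smooth (\<lambda>x. f x + g x)"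
proof -
  assume a: "smooth f" "smooth g"
  have e: "(\<lambda>x. f x + g x) = (\<lambda>x. \<Sum>p\<leftarrow>[(f,\<lambda>_. 1), (g, \<lambda>_. 1)]. fst p x * snd p x)"
    by simp
  have "\<forall>p\<in>set [(f,\<lambda>_. 1), (g, \<lambda>_. 1)]. smooth (fst p) \<and> smooth (snd p)"
    using a smooth_const[of 1] by simp
  then have "SP (\<lambda>x. f x + g x)"
    unfolding SP_def using e by blast
  then show ?thesis by (rule SP_smooth)
qed

lemma smooth_sum: "finite A \<Longrightarrow> (\<And>a. a \<in> A \<Longrightarrow> smooth (f a)) \<Longrightarrow> smooth (\<lambda>x. \<Sum>a\<in>A. f a x)"
proof (induction A rule: finite_induct)
  case empty then show ?case using smooth_zero by simp
next
  case (insert a A)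
  have h1: "smooth (f a)" using insert.prems by blast
  have h2: "smooth (\<lambda>x. \<Sum>a\<in>A. f a x)" using insert.prems by (intro insert.IH) blast
  have "smooth (\<lambda>x. f a x + (\<Sum>a\<in>A. f a x))"
    by (rule smooth_add[OF h1 h2])
  then show ?case using insert(1,2) by simp
qed

lemma pdiff_lin:
  assumes "smooth f" "smooth g"
  shows "pdiff j (\<lambda>x. a * f x + b * g x) = (\<lambda>x. a * pdiff j f x + b * pdiff j g x)"
  by (rule pdiff_eq, rule has_vector_derivative_add[OF has_vector_derivative_mult_right[OF smooth_dd]
        has_vector_derivative_mult_right[OF smooth_dd]]) (use assms in auto)

lemma Dpar_lin:
  assumes "smooth f" "smooth g"
  shows "Dpar js (\<lambda>x. a * f x + b * g x) = (\<lambda>x. a * Dpar js f x + b * Dpar js g x)"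
  by (induction js) (auto simp: pdiff_lin smooth_Dpar assms)


lemma C_smooth:
  assumes "bidiff B" "smooth f" "smooth g" shows "smooth (B f g)"
proof -
  obtain S c where S: "finite S" "\<forall>p\<in>S. smooth (c p)"
    and B: "\<forall>f g. smooth f \<longrightarrow> smooth g \<longrightarrow>
        B f g = (\<lambda>x. \<Sum>p\<in>S. c p x * Dpar (fst p) f x * Dpar (snd p) g x)"
    using assms(1) unfolding bidiff_def by blast
  have e: "B f g = (\<lambda>x. \<Sum>p\<in>S. c p x * Dpar (fst p) f x * Dpar (snd p) g x)"
    using B assms by blast
  show ?thesis unfolding e
    by (rule smooth_sum[OF S(1)], rule smooth_mult, rule smooth_mult)
       (use S(2) assms(2,3) smooth_Dpar in auto)
qed

lemma C_lin2:
  assumes "bidiff B" "smooth f" "smooth g" "smooth h"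
  shows "B f (\<lambda>x. a * g x + b * h x) = (\<lambda>x. a * B f g x + b * B f h x)"
proof -
  obtain S c where S: "finite S" "\<forall>p\<in>S. smooth (c p)"
    and B: "\<forall>f g. smooth f \<longrightarrow> smooth g \<longrightarrow>
        B f g = (\<lambda>x. \<Sum>p\<in>S. c p x * Dpar (fst p) f x * Dpar (snd p) g x)"
    using assms(1) unfolding bidiff_def by blast
  have sm: "smooth (\<lambda>x. a * g x + b * h x)"
    using assms by (intro smooth_add smooth_mult smooth_const)
  have e1: "B f g = (\<lambda>x. \<Sum>p\<in>S. c p x * Dpar (fst p) f x * Dpar (snd p) g x)" using B assms by blast
  have e2: "B f h = (\<lambda>x. \<Sum>p\<in>S. c p x * Dpar (fst p) f x * Dpar (snd p) h x)" using B assms by blast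
  have e3: "B f (\<lambda>x. a * g x + b * h x) = (\<lambda>x. \<Sum>p\<in>S. c p x * Dpar (fst p) f x * Dpar (snd p) (\<lambda>x. a * g x + b * h x) x)"
    using B assms sm by blast
  show ?thesis unfolding e1 e2 e3 Dpar_lin[OF assms(3,4)]
  proof (rule ext)
    fix x
    show "(\<Sum>p\<in>S. c p x * Dpar (fst p) f x * (a * Dpar (snd p) g x + b * Dpar (snd p) h x)) =
          a * (\<Sum>p\<in>S. c p x * Dpar (fst p) f x * Dpar (snd p) g x) + b * (\<Sum>p\<in>S. c p x * Dpar (fst p) f x * Dpar (snd p) h x)"
      unfolding sum_distrib_left sum.distrib[symmetric] by (rule sum.cong) (simp_all add: algebra_simps)
  qed
qed

lemma C_lin1:
  assumes "bidiff B" "smooth f" "smooth g" "smooth h"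
  shows "B (\<lambda>x. a * g x + b * h x) f = (\<lambda>x. a * B g f x + b * B h f x)"
proof -
  obtain S c where S: "finite S" "\<forall>p\<in>S. smooth (c p)"
    and B: "\<forall>f g. smooth f \<longrightarrow> smooth g \<longrightarrow>
        B f g = (\<lambda>x. \<Sum>p\<in>S. c p x * Dpar (fst p) f x * Dpar (snd p) g x)"
    using assms(1) unfolding bidiff_def by blast
  have sm: "smooth (\<lambda>x. a * g x + b * h x)"
    using assms by (intro smooth_add smooth_mult smooth_const)
  have e1: "B g f = (\<lambda>x. \<Sum>p\<in>S. c p x * Dpar (fst p) g x * Dpar (snd p) f x)" using B assms by blast
  have e2: "B h f = (\<lambda>x. \<Sum>p\<in>S. c p x * Dpar (fst p) h x * Dpar (snd p) f x)" using B assms by blast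
  have e3: "B (\<lambda>x. a * g x + b * h x) f = (\<lambda>x. \<Sum>p\<in>S. c p x * Dpar (fst p) (\<lambda>x. a * g x + b * h x) x * Dpar (snd p) f x)"
    using B assms sm by blast
  show ?thesis unfolding e1 e2 e3 Dpar_lin[OF assms(3,4)]
  proof (rule ext)
    fix x
    show "(\<Sum>p\<in>S. c p x * (a * Dpar (fst p) g x + b * Dpar (fst p) h x) * Dpar (snd p) f x) =
          a * (\<Sum>p\<in>S. c p x * Dpar (fst p) g x * Dpar (snd p) f x) + b * (\<Sum>p\<in>S. c p x * Dpar (fst p) h x * Dpar (snd p) f x)"
      unfolding sum_distrib_left sum.distrib[symmetric] by (rule sum.cong) (simp_all add: algebra_simps)
  qed
qed

lemma star_smooth:
  assumes bd: "\<And>r. r \<ge> 1 \<Longrightarrow> bidiff (C r)" and "smooth_ser F" "smooth_ser G"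
  shows "smooth_ser (star C F G)"
  unfolding smooth_ser_def star_def
proof
  fix n
  show "smooth (\<lambda>x. (\<Sum>a\<le>n. F a x * G (n - a) x) + (\<Sum>r\<in>{1..n}. \<Sum>a\<le>n - r. \<i> ^ r * C r (F a) (G (n - r - a)) x))"
  proof (rule smooth_add)
    show "smooth (\<lambda>x. \<Sum>a\<le>n. F a x * G (n - a) x)"
    proof (rule smooth_sum)
      fix a
      have "smooth (F a)" "smooth (G (n - a))" using assms(2,3) unfolding smooth_ser_def by blast+
      then show "smooth (\<lambda>x. F a x * G (n - a) x)" by (rule smooth_mult)
    qed simp
    show "smooth (\<lambda>x. \<Sum>r\<in>{1..n}. \<Sum>a\<le>n - r. \<i> ^ r * C r (F a) (G (n - r - a)) x)"
    proof (rule smooth_sum)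
      fix r assume r: "r \<in> {1..n}"
      show "smooth (\<lambda>x. \<Sum>a\<le>n - r. \<i> ^ r * C r (F a) (G (n - r - a)) x)"
      proof (rule smooth_sum)
        fix a
        have "smooth (C r (F a) (G (n - r - a)))"
          using r assms(2,3) unfolding smooth_ser_def by (intro C_smooth[OF bd]) auto
        then show "smooth (\<lambda>x. \<i> ^ r * C r (F a) (G (n - r - a)) x)"
          by (rule smooth_mult[OF smooth_const])
      qed simp
    qed simp
  qed
qed

lemma sum_lin:
  fixes a b :: complex
  assumes "\<And>i. i \<in> A \<Longrightarrow> f i = a * g i + b * h i"
  shows "(\<Sum>i\<in>A. f i) = a * (\<Sum>i\<in>A. g i) + b * (\<Sum>i\<in>A. h i)"
proof -
  have "(\<Sum>i\<in>A. f i) = (\<Sum>i\<in>A. a * g i + b * h i)" by (rule sum.cong) (simp_all add: assms)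
  also have "\<dots> = a * (\<Sum>i\<in>A. g i) + b * (\<Sum>i\<in>A. h i)" by (simp add: sum.distrib sum_distrib_left)
  finally show ?thesis .
qed

lemma star_lin2:
  assumes bd: "\<And>r. r \<ge> 1 \<Longrightarrow> bidiff (C r)" and sm: "smooth_ser F" "smooth_ser G" "smooth_ser H"
  shows "star C F (\<lambda>n x. a * G n x + b * H n x) = (\<lambda>n x. a * star C F G n x + b * star C F H n x)"
proof (intro ext)
  fix n x
  have cl: "C r (F i) (\<lambda>x. a * G m x + b * H m x) = (\<lambda>x. a * C r (F i) (G m) x + b * C r (F i) (H m) x)"
    if "r \<in> {1..n}" for r i m
    using that sm unfolding smooth_ser_def by (intro C_lin2[OF bd]) auto
  have t1: "(\<Sum>i\<le>n. F i x * (a * G (n - i) x + b * H (n - i) x))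
     = a * (\<Sum>i\<le>n. F i x * G (n - i) x) + b * (\<Sum>i\<le>n. F i x * H (n - i) x)"
    by (rule sum_lin) (simp add: algebra_simps)
  have t2: "(\<Sum>r\<in>{1..n}. \<Sum>i\<le>n - r. \<i> ^ r * C r (F i) (\<lambda>x. a * G (n - r - i) x + b * H (n - r - i) x) x)
     = a * (\<Sum>r\<in>{1..n}. \<Sum>i\<le>n - r. \<i> ^ r * C r (F i) (G (n - r - i)) x)
       + b * (\<Sum>r\<in>{1..n}. \<Sum>i\<le>n - r. \<i> ^ r * C r (F i) (H (n - r - i)) x)"
  proof (rule sum_lin)
    fix r assume r: "r \<in> {1..n}"
    show "(\<Sum>i\<le>n - r. \<i> ^ r * C r (F i) (\<lambda>x. a * G (n - r - i) x + b * H (n - r - i) x) x)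
       = a * (\<Sum>i\<le>n - r. \<i> ^ r * C r (F i) (G (n - r - i)) x)
       + b * (\<Sum>i\<le>n - r. \<i> ^ r * C r (F i) (H (n - r - i)) x)"
      by (rule sum_lin) (simp add: cl[OF r] algebra_simps)
  qed
  show "star C F (\<lambda>n x. a * G n x + b * H n x) n x = a * star C F G n x + b * star C F H n x"
    unfolding star_def using t1 t2 by (simp add: algebra_simps)
qed

lemma star_lin1:
  assumes bd: "\<And>r. r \<ge> 1 \<Longrightarrow> bidiff (C r)" and sm: "smooth_ser F" "smooth_ser G" "smooth_ser H"
  shows "star C (\<lambda>n x. a * G n x + b * H n x) F = (\<lambda>n x. a * star C G F n x + b * star C H F n x)"
proof (intro ext)
  fix n x
  have cl: "C r (\<lambda>x. a * G m x + b * H m x) (F i) = (\<lambda>x. a * C r (G m) (F i) x + b * C r (H m) (F i) x)"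
    if "r \<in> {1..n}" for r i m
    using that sm unfolding smooth_ser_def by (intro C_lin1[OF bd]) auto
  have t1: "(\<Sum>i\<le>n. (a * G i x + b * H i x) * F (n - i) x)
     = a * (\<Sum>i\<le>n. G i x * F (n - i) x) + b * (\<Sum>i\<le>n. H i x * F (n - i) x)"
    by (rule sum_lin) (simp add: algebra_simps)
  have t2: "(\<Sum>r\<in>{1..n}. \<Sum>i\<le>n - r. \<i> ^ r * C r (\<lambda>x. a * G i x + b * H i x) (F (n - r - i)) x)
     = a * (\<Sum>r\<in>{1..n}. \<Sum>i\<le>n - r. \<i> ^ r * C r (G i) (F (n - r - i)) x)
       + b * (\<Sum>r\<in>{1..n}. \<Sum>i\<le>n - r. \<i> ^ r * C r (H i) (F (n - r - i)) x)"
  proof (rule sum_lin)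
    fix r assume r: "r \<in> {1..n}"
    show "(\<Sum>i\<le>n - r. \<i> ^ r * C r (\<lambda>x. a * G i x + b * H i x) (F (n - r - i)) x)
       = a * (\<Sum>i\<le>n - r. \<i> ^ r * C r (G i) (F (n - r - i)) x)
       + b * (\<Sum>i\<le>n - r. \<i> ^ r * C r (H i) (F (n - r - i)) x)"
      by (rule sum_lin) (simp add: cl[OF r] algebra_simps)
  qed
  show "star C (\<lambda>n x. a * G n x + b * H n x) F n x = a * star C G F n x + b * star C H F n x"
    unfolding star_def using t1 t2 by (simp add: algebra_simps)
qed

lemma smooth_fser: "smooth f \<Longrightarrow> smooth_ser (fser f)"
  unfolding smooth_ser_def fser_def by (auto intro: smooth_zero)

lemma smooth_coord_ser: "smooth_ser (coord i)"
  unfolding coord_def by (intro smooth_fser smooth_coord)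

lemma smooth_one: "smooth_ser one_ser"
  unfolding one_ser_def by (intro smooth_fser smooth_const)

lemma smooth_monom2: "smooth_ser (monom [j,k])"
  unfolding monom_def by (intro smooth_fser) (simp add: lessThan_nat_numeral smooth_mult smooth_coord)

lemma conj_coord: "conj_ser (coord i) = coord i"
  unfolding conj_ser_def coord_def fser_def by (auto intro!: ext)

lemma conj_monom2: "conj_ser (monom [j,k]) = monom [j,k]"
  unfolding conj_ser_def monom_def fser_def by (auto intro!: ext simp: lessThan_nat_numeral)

lemma perms2: "{\<sigma>. \<sigma> permutes {..<2::nat}} = {id, Transposition.transpose 0 1}"
proof -
  have "card {\<sigma>. \<sigma> permutes {..<2::nat}} = fact 2" by (rule card_permutations) auto
  then have c: "card {\<sigma>. \<sigma> permutes {..<2::nat}} = 2" by simp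
  have sub: "{id, Transposition.transpose 0 1} \<subseteq> {\<sigma>. \<sigma> permutes {..<2::nat}}"
    by (auto intro: permutes_swap_id)
  have ne: "id \<noteq> (Transposition.transpose 0 (1::nat))"
    by (metis id_apply transpose_apply_first zero_neq_one)
  have c2: "card {id, Transposition.transpose 0 (1::nat)} = 2"
    by (subst card_insert_disjoint) (use ne in auto)
  show ?thesis
    by (rule card_subset_eq[OF _ sub, symmetric]) (simp_all only: finite_permutations[OF finite_lessThan] c c2)
qed

lemma W2:
  assumes "weyl C" "smooth_ser F"
  shows "star C (monom [j,k]) F = (\<lambda>n x. (1/2) * star C (coord j) (star C (coord k) F) n x + (1/2) * star C (coord k) (star C (coord j) F) n x)"
proof -
  have ne: "id \<noteq> (Transposition.transpose 0 (1::nat))"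
    by (metis id_apply transpose_apply_first zero_neq_one)
  have "star C (monom [j,k]) F = scale_ser (1 / of_nat (fact 2))
         (sum_ser (\<lambda>\<sigma>. nest C (map (\<lambda>i. [j,k] ! \<sigma> i) [0..<2]) F) {id, Transposition.transpose 0 1})"
    using assms unfolding weyl_def perms2[symmetric] by (metis One_nat_def Suc_1 Suc_le_mono le0 length_Cons list.size(3))
  moreover have "(\<Sum>\<sigma>\<in>{id, Transposition.transpose 0 1}. H \<sigma>) = H id + H (Transposition.transpose 0 (1::nat))"
    for H :: "(nat \<Rightarrow> nat) \<Rightarrow> complex"
    by (subst sum.insert) (use ne in auto)
  moreover have "map (\<lambda>i. [j,k] ! Transposition.transpose 0 1 i) [0..<2] = [k, j]"
    by (simp add: upt_rec)
  moreover have "map (\<lambda>i. [j,k] ! id i) [0..<2] = [j, k]"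
    by (simp add: upt_rec)
  ultimately show ?thesis
    by (auto intro!: ext simp: scale_ser_def sum_ser_def algebra_simps)
qed


lemma alg:
  fixes P Q :: "'i \<Rightarrow> 'i \<Rightarrow> 'i \<Rightarrow> complex"
  assumes E3: "\<And>i j k. P i j k + P j i k = Q i j k + Q j i k"
    and E4: "\<And>i j k. P i j k + P i k j = Q i j k + Q i k j"
  shows "P i j k - Q i j k = 1/6 * ((P i j k - P i k j - (Q j k i - Q k j i))
            + (P k i j - P k j i - (Q i j k - Q j i k))
            + (P j k i - P j i k - (Q k i j - Q i k j)))"
    and "P j i k - Q j i k = - (P i j k - Q i j k)"
    and "P i k j - Q i k j = - (P i j k - Q i j k)"
    and "P k j i - Q k j i = - (P i j k - Q i j k)"
proof -
  define A where "A a b c = P a b c - Q a b c" for a b c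
  have a12: "A b a c = - A a b c" for a b c using E3[of a b c] by (simp add: A_def algebra_simps)
  have a23: "A a c b = - A a b c" for a b c using E4[of a b c] by (simp add: A_def algebra_simps)
  have h1: "A i k j = - A i j k" by (rule a23)
  have h3: "A j i k = - A i j k" by (rule a12)
  have h4: "A k i j = A i j k" using a12[of i k j] a23[of i j k] by simp
  have h5: "A j k i = A i j k" using a23[of j i k] a12[of i j k] by simp
  have h2: "A k j i = - A i j k" using a12[of j k i] h5 by simp
  have "(P i j k - P i k j - (Q j k i - Q k j i))
            + (P k i j - P k j i - (Q i j k - Q j i k))
            + (P j k i - P j i k - (Q k i j - Q i k j))
        = A i j k - A i k j - A k j i + A k i j - A j i k + A j k i"
    by (simp add: A_def algebra_simps)
  also have "\<dots> = 6 * A i j k" using h1 h2 h3 h4 h5 by simp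
  finally show "P i j k - Q i j k = 1/6 * ((P i j k - P i k j - (Q j k i - Q k j i))
            + (P k i j - P k j i - (Q i j k - Q j i k))
            + (P j k i - P j i k - (Q k i j - Q i k j)))" by (simp add: A_def)
  show "P j i k - Q j i k = - (P i j k - Q i j k)" using h3 by (simp add: A_def)
  show "P i k j - Q i k j = - (P i j k - Q i j k)" using h1 by (simp add: A_def)
  show "P k j i - Q k j i = - (P i j k - Q i j k)" using h2 by (simp add: A_def)
qed

theorem proposition1:
  fixes C :: "nat \<Rightarrow> (real^'n::finite \<Rightarrow> complex) \<Rightarrow> (real^'n \<Rightarrow> complex) \<Rightarrow> (real^'n \<Rightarrow> complex)"
  assumes bidiff: "\<And>r. r \<ge> 1 \<Longrightarrow> bidiff (C r)"
    and weyl: "weyl C"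
    and herm: "weakly_hermitian C"
    and unity: "stable_unity C"
  shows "\<forall>i j k.
      assoc C (coord i) (coord j) (coord k)
        = scale_ser (1/6) (jacobiator C (coord i) (coord j) (coord k))
    \<and> assoc C (coord j) (coord i) (coord k) = scale_ser (-1) (assoc C (coord i) (coord j) (coord k))
    \<and> assoc C (coord i) (coord k) (coord j) = scale_ser (-1) (assoc C (coord i) (coord j) (coord k))
    \<and> assoc C (coord k) (coord j) (coord i) = scale_ser (-1) (assoc C (coord i) (coord j) (coord k))"
proof -
  let ?X = "coord :: 'n \<Rightarrow> 'n ser"
  let ?S = "\<lambda>a b. star C (?X a) (?X b)"
  define P where "P a b c = star C (?X a) (?S b c)" for a b c
  define Q where "Q a b c = star C (?S a b) (?X c)" for a b c
  have sX: "smooth_ser (?X a)" for a by (rule smooth_coord_ser)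
  have sS: "smooth_ser (?S a b)" for a b by (intro star_smooth bidiff sX)
  have hm: "conj_ser (star C (?X j) F) = star C (conj_ser F) (?X j)" if "smooth_ser F" for j F
    using herm that unfolding weakly_hermitian_def by blast
  have cS: "conj_ser (?S a b) = ?S b a" for a b
    using hm[OF sX, of a b] by (simp add: conj_coord)
  have PQ: "Q a b c = conj_ser (P c b a)" for a b c
    unfolding P_def Q_def using hm[OF sS, of c b a] cS[of b a] by simp
  have sXone: "star C (?X k) one_ser = ?X k" for k using unity sX unfolding stable_unity_def by blast
  have M: "monom [j,k] = (\<lambda>n x. (1/2) * ?S j k n x + (1/2) * ?S k j n x)" for j k
  proof -
    have "monom [j,k] = star C (monom [j,k]) one_ser"
      using unity smooth_monom2 unfolding stable_unity_def by metis
    also have "\<dots> = (\<lambda>n x. (1/2) * ?S j k n x + (1/2) * ?S k j n x)"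
      by (simp add: W2[OF weyl smooth_one] sXone)
    finally show ?thesis .
  qed
  have E3: "P i j k n x + P j i k n x = Q i j k n x + Q j i k n x" for i j k n x
  proof -
    have "star C (monom [i,j]) (?X k) = (\<lambda>n x. (1/2) * P i j k n x + (1/2) * P j i k n x)"
      unfolding P_def by (rule W2[OF weyl sX])
    moreover have "star C (monom [i,j]) (?X k) = (\<lambda>n x. (1/2) * Q i j k n x + (1/2) * Q j i k n x)"
      unfolding M Q_def by (rule star_lin1[OF bidiff sX sS sS])
    ultimately have "(1/2) * P i j k n x + (1/2) * P j i k n x = (1/2) * Q i j k n x + (1/2) * Q j i k n x"
      by metis
    then have "(1/2) * (P i j k n x + P j i k n x) = (1/2) * (Q i j k n x + Q j i k n x)"
      by (simp only: distrib_left)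
    moreover have nz: "(1/2::complex) \<noteq> 0" by simp
    ultimately show ?thesis using mult_left_cancel[OF nz] by blast
  qed
  have E4: "P i j k n x + P i k j n x = Q i j k n x + Q i k j n x" for i j k n x
  proof -
    have Y: "star C (?X i) (monom [j,k]) = (\<lambda>n x. (1/2) * P i j k n x + (1/2) * P i k j n x)"
      unfolding M P_def by (rule star_lin2[OF bidiff sX sS sS])
    have "conj_ser (star C (?X i) (monom [j,k])) = star C (monom [j,k]) (?X i)"
      using hm[OF smooth_monom2, of i j k] by (simp add: conj_monom2)
    also have "\<dots> = (\<lambda>n x. (1/2) * P j k i n x + (1/2) * P k j i n x)"
      unfolding P_def by (rule W2[OF weyl sX])
    finally have "cnj ((1/2) * P i j k n x + (1/2) * P i k j n x) = (1/2) * P j k i n x + (1/2) * P k j i n x"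
      unfolding Y conj_ser_def by metis
    then have "P i j k n x + P i k j n x = cnj (P j k i n x + P k j i n x)"
      by (metis (no_types) complex_cnj_add complex_cnj_cnj complex_cnj_mult complex_cnj_divide
          complex_cnj_one complex_cnj_numeral distrib_left mult_cancel_left zero_neq_numeral divide_eq_0_iff one_neq_zero)
    then show ?thesis using PQ by (simp add: conj_ser_def)
  qed
  have sub_lin: "sub_ser F G = (\<lambda>n x. 1 * F n x + (-1) * G n x)" for F G :: "'n ser"
    by (auto simp: sub_ser_def intro!: ext)
  have comm_eq: "comm C (?X a) (comm C (?X b) (?X c)) n x
      = P a b c n x - P a c b n x - (Q b c a n x - Q c b a n x)" for a b c n x
  proof -
    have cb: "comm C (?X b) (?X c) = (\<lambda>n x. 1 * ?S b c n x + (-1) * ?S c b n x)"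
      unfolding comm_def sub_lin ..
    have L2: "star C (?X a) (comm C (?X b) (?X c)) = (\<lambda>n x. 1 * P a b c n x + (-1) * P a c b n x)"
      unfolding cb P_def by (rule star_lin2[OF bidiff sX sS sS])
    have L1: "star C (comm C (?X b) (?X c)) (?X a) = (\<lambda>n x. 1 * Q b c a n x + (-1) * Q c b a n x)"
      unfolding cb Q_def by (rule star_lin1[OF bidiff sX sS sS])
    have "comm C (?X a) (comm C (?X b) (?X c)) n x
        = star C (?X a) (comm C (?X b) (?X c)) n x - star C (comm C (?X b) (?X c)) (?X a) n x"
      unfolding comm_def[of C "?X a"] sub_ser_def ..
    also have "\<dots> = P a b c n x - P a c b n x - (Q b c a n x - Q c b a n x)"
      unfolding L1 L2 by simp
    finally show ?thesis .
  qed
  show ?thesis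
  proof (intro allI conjI)
    fix i j k
    have al: "P i j k n x - Q i j k n x = 1/6 * ((P i j k n x - P i k j n x - (Q j k i n x - Q k j i n x))
            + (P k i j n x - P k j i n x - (Q i j k n x - Q j i k n x))
            + (P j k i n x - P j i k n x - (Q k i j n x - Q i k j n x)))"
      "P j i k n x - Q j i k n x = - (P i j k n x - Q i j k n x)"
      "P i k j n x - Q i k j n x = - (P i j k n x - Q i j k n x)"
      "P k j i n x - Q k j i n x = - (P i j k n x - Q i j k n x)" for n x
      by (rule alg[of "\<lambda>a b c. P a b c n x" "\<lambda>a b c. Q a b c n x", OF E3 E4])+
    show "assoc C (?X i) (?X j) (?X k) = scale_ser (1/6) (jacobiator C (?X i) (?X j) (?X k))"
      unfolding assoc_def jacobiator_def scale_ser_def add_ser_def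
      by (intro ext) (simp only: sub_ser_def al(1)[unfolded P_def Q_def] comm_eq P_def Q_def)
    show "assoc C (?X j) (?X i) (?X k) = scale_ser (-1) (assoc C (?X i) (?X j) (?X k))"
      unfolding assoc_def scale_ser_def
      by (intro ext) (simp add: sub_ser_def al(2)[unfolded P_def Q_def])
    show "assoc C (?X i) (?X k) (?X j) = scale_ser (-1) (assoc C (?X i) (?X j) (?X k))"
      unfolding assoc_def scale_ser_def
      by (intro ext) (simp add: sub_ser_def al(3)[unfolded P_def Q_def])
    show "assoc C (?X k) (?X j) (?X i) = scale_ser (-1) (assoc C (?X i) (?X j) (?X k))"
      unfolding assoc_def scale_ser_def
      by (intro ext) (simp add: sub_ser_def al(4)[unfolded P_def Q_def])
  qed
qed

end
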